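(* Let $\mathbf b,\mathbf b'\in\mathrm{Seq}(B,d)$. Then $\mathbf b^*:=b_1^*\cdots b_d^*\in\mathrm{Seq}(B^*,d)$, and $(y_{\mathbf b'},y_{\mathbf b^*})_d=\pm\, d!\,\delta_{\mathbf b\sim\mathbf b'}$, where $\delta_{\mathbf b\sim\mathbf b'}$ is $1$ if $\mathbf b\sim\mathbf b'$ and $0$ otherwise.
   Context: Let $R$ be a principal ideal domain of characteristic $0$. Supermodules are $\mathbb Z/2$-graded, $|v|$ is the parity of a homogeneous $v$. A calibrated $R$-supermodule is a free $R$-supermodule $V=V_{\bar0}\oplus V_{\bar1}$ of finite rank with a decomposition $V_{\bar0}=V_{\mathfrak a}\oplus V_{\mathfrak c}$ into free $R$-submodules; given bases $B_{\mathfrak a},B_{\mathfrak c},B_{\bar1}$ of these three pieces and a total order on $B=B_{\mathfrak a}\sqcup B_{\mathfrak c}\sqcup B_{\bar1}$, define: $\mathfrak S_d$ acts on $V^{\otimes d}$ on the right by $(v_1\otimes\cdots\otimes v_d)^\sigma=(-1)^{\langle\sigma;\mathbf v\rangle}v_{\sigma1}\otimes\cdots\otimes v_{\sigma d}$, $\langle\sigma;\mathbf v\rangle$ = number of $k<l$ with $\sigma^{-1}k>\sigma^{-1}l$ and $v_k,v_l$ odd; $\mathfrak S_d$ acts on $B^d$ by place permutations and $\sim$ means same orbit; for $\mathbf b\in B^d$, $\langle\mathbf b\rangle$ = number of $k<l$ with $b_k,b_l\in B_{\bar1}$, $b_k>b_l$; $[\mathbf b]^!_{\mathfrak c}=\prod_{b\in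 B_{\mathfrak c}}\#\{k:b_k=b\}!$; $\mathrm{Seq}(B,d)$ = tuples in $B^d$ in which only elements of $B_{\mathfrak a}\sqcup B_{\mathfrak c}$ may repeat; $x_{\mathbf b}=\sum(-1)^{\langle\mathbf b\rangle+\langle\mathbf b'\rangle}b'_1\otimes\cdots\otimes b'_d$ over distinct $\mathbf b'\sim\mathbf b$, and $y_{\mathbf b}=[\mathbf b]^!_{\mathfrak c}x_{\mathbf b}$. Setting: $V$ is a calibrated $R$-supermodule equipped with an even, non-degenerate, $R$-valued bilinear form $(\cdot,\cdot)$ which is supersymmetric or superantisymmetric, such that $(V_{\mathfrak a},V_{\mathfrak a})=0$ and the restriction of $(\cdot,\cdot)$ to $V_{\mathfrak a}\times V_{\mathfrak c}$ is a perfect pairing. Choose bases $B_{\mathfrak a}=\{a_1,\dots,a_r\}$, $B_{\mathfrak c}=\{c_1,\dots,c_r\}$ with $(a_i,c_j)=\delta_{i,j}$, a basis $B_{\bar1}$ of $V_{\bar1}$, and $B=B_{\mathfrak a}\sqcup B_{\mathfrak c}\sqcup B_{\bar1}$. Let $B^*=\{b^*:b\in B\}$ be the dual basis, $(b',b^* )=\delta_{b,b'}$ for $b,b'\in B$. Then $c_i^*=\pm a_i$, and $V$ is also calibrated with the same $V_{\mathfrak a}$ and complement $V'_{\mathfrak c}=\mathrm{span}_R\{a_1^*,\dots,a_r^*\}$, with basis $B^*$ split as $B^*_{\mathfrak a}=\{c_i^*\}$, $B^*_{\mathfrak c}=\{a_i^*\}$, $B^*_{\bar1}=\{b^*:b\in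 B_{\bar1}\}$ (and some fixed total order on $B^*$); $\mathrm{Seq}(B^*,d)$ and $y_{\mathbf b^*}$ are formed with respect to this data. The form extends to $V^{\otimes d}$ by $(v_1\otimes\cdots\otimes v_d,w_1\otimes\cdots\otimes w_d)_d=(-1)^{\langle\mathbf v,\mathbf w\rangle}(v_1,w_1)\cdots(v_d,w_d)$, where $\langle\mathbf v,\mathbf w\rangle$ is the number of pairs $k>l$ with $v_k$ and $w_l$ odd. *)

theory Defs
  imports Main "HOL-Combinatorics.Permutations"
begin

definition is_ideal :: "'r::comm_ring_1 set \<Rightarrow> bool" where
  "is_ideal I \<longleftrightarrow> 0 \<in> I \<and> (\<forall>x\<in>I. \<forall>y\<in>I. x + y \<in> I) \<and> (\<forall>r. \<forall>x\<in>I. r * x \<in> I)"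

definition pid_type :: "'r::idom itself \<Rightarrow> bool" where
  "pid_type _ \<longleftrightarrow> (\<forall>I::'r set. is_ideal I \<longrightarrow> (\<exists>g. I = {r * g | r. True}))"

datatype kind = KA | KC | KO   (* B_a, B_c (both even), B_1 (odd) *)

(* calibration of the dual basis: b^* is in B^*_a iff b in B_c, in B^*_c iff b in B_a *)
fun swapk :: "kind \<Rightarrow> kind" where
  "swapk KA = KC" | "swapk KC = KA" | "swapk KO = KO"

text \<open>V is the free module with basis indexed by the finite type 'b; a vector is its coordinate
  function 'b => 'r.  A tensor in V^{\<otimes>d} is a coordinate function on B^d, i.e. on lists of
  length d.\<close>

definition bil :: "('b::finite \<Rightarrow> 'b \<Rightarrow> 'r::comm_ring_1) \<Rightarrow> ('b \<Rightarrow> 'r) \<Rightarrow> ('b \<Rightarrow> 'r) \<Rightarrow> 'r" where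
  "bil G v w = (\<Sum>x\<in>UNIV. \<Sum>y\<in>UNIV. v x * w y * G x y)"

definition basis_vec :: "'b \<Rightarrow> ('b \<Rightarrow> 'r::comm_ring_1)" where
  "basis_vec b = (\<lambda>c. if c = b then 1 else 0)"

definition tensor :: "('b \<Rightarrow> 'r::comm_ring_1) list \<Rightarrow> ('b list \<Rightarrow> 'r)" where
  "tensor vs = (\<lambda>e. if length e = length vs then (\<Prod>k<length vs. (vs ! k) (e ! k)) else 0)"

definition orbit_eq :: "'b list \<Rightarrow> 'b list \<Rightarrow> bool" where
  "orbit_eq xs ys \<longleftrightarrow> length ys = length xs \<and>
     (\<exists>\<sigma>. \<sigma> permutes {..<length xs} \<and> ys = map (\<lambda>i. xs ! \<sigma> i) [0..<length xs])"

definition odd_inv :: "('b \<Rightarrow> kind) \<Rightarrow> ('b \<Rightarrow> 'b \<Rightarrow> bool) \<Rightarrow> 'b list \<Rightarrow> nat" where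
  "odd_inv K lt xs = card {(k, l). k < l \<and> l < length xs \<and> K (xs ! k) = KO \<and> K (xs ! l) = KO
                                   \<and> lt (xs ! l) (xs ! k)}"

definition cfact :: "('b \<Rightarrow> kind) \<Rightarrow> 'b list \<Rightarrow> nat" where
  "cfact K xs = (\<Prod>b\<in>{b\<in>set xs. K b = KC}. fact (count_list xs b))"

definition Seq :: "'v set \<Rightarrow> ('v \<Rightarrow> kind) \<Rightarrow> nat \<Rightarrow> 'v list set" where
  "Seq S K d = {xs. length xs = d \<and> set xs \<subseteq> S \<and>
      (\<forall>i<d. \<forall>j<d. i \<noteq> j \<longrightarrow> xs ! i = xs ! j \<longrightarrow> K (xs ! i) \<noteq> KO)}"

text \<open>Generic version for a calibrated basis whose elements are vec b (b ranging over the index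
  type 'b), with kinds K and strict total order lt (both given on indices).  Since vec is
  injective, distinct tuples of basis elements correspond to distinct index tuples.\<close>

definition x_gen :: "('b::finite \<Rightarrow> ('b \<Rightarrow> 'r::comm_ring_1)) \<Rightarrow> ('b \<Rightarrow> kind) \<Rightarrow> ('b \<Rightarrow> 'b \<Rightarrow> bool)
                      \<Rightarrow> 'b list \<Rightarrow> ('b list \<Rightarrow> 'r)" where
  "x_gen vec K lt bs = (\<lambda>f. \<Sum>e\<in>{e. orbit_eq bs e}.
       (-1) ^ (odd_inv K lt bs + odd_inv K lt e) * tensor (map vec e) f)"

definition y_gen :: "('b::finite \<Rightarrow> ('b \<Rightarrow> 'r::comm_ring_1)) \<Rightarrow> ('b \<Rightarrow> kind) \<Rightarrow> ('b \<Rightarrow> 'b \<Rightarrow> bool)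
                      \<Rightarrow> 'b list \<Rightarrow> ('b list \<Rightarrow> 'r)" where
  "y_gen vec K lt bs = (\<lambda>f. of_nat (cfact K bs) * x_gen vec K lt bs f)"

definition pair_sgn :: "('b \<Rightarrow> kind) \<Rightarrow> 'b list \<Rightarrow> 'b list \<Rightarrow> nat" where
  "pair_sgn K e f = card {(k, l). l < k \<and> k < length e \<and> K (e ! k) = KO \<and> K (f ! l) = KO}"

(* bilinear extension of (v_1..v_d, w_1..w_d)_d from basis tensors (which are homogeneous) *)
definition form_d :: "('b::finite \<Rightarrow> 'b \<Rightarrow> 'r::comm_ring_1) \<Rightarrow> ('b \<Rightarrow> kind) \<Rightarrow> nat
                      \<Rightarrow> ('b list \<Rightarrow> 'r) \<Rightarrow> ('b list \<Rightarrow> 'r) \<Rightarrow> 'r" where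
  "form_d G K d X Y = (\<Sum>e\<in>{e. length e = d}. \<Sum>f\<in>{f. length f = d}.
       X e * Y f * (-1) ^ pair_sgn K e f * (\<Prod>k<d. G (e ! k) (f ! k)))"

end

theory Submission
  imports Defs "HOL-Combinatorics.Multiset_Permutations"
begin



lemma orbit_eq_mset: "orbit_eq xs ys \<longleftrightarrow> mset ys = mset xs"
proof
  assume "orbit_eq xs ys"
  then obtain \<sigma> where s: "\<sigma> permutes {..<length xs}" "ys = permute_list \<sigma> xs"
    unfolding orbit_eq_def permute_list_def by auto
  then show "mset ys = mset xs" by simp
next
  assume h: "mset ys = mset xs"
  then obtain p where "p permutes {..<length xs}" "permute_list p xs = ys"
    by (metis mset_eq_permutation)
  moreover have "length ys = length xs" using h by (metis size_mset)
  ultimately show "orbit_eq xs ys" unfolding orbit_eq_def permute_list_def by auto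
qed

lemma finite_orbit: "finite {e. orbit_eq (bs::'b::finite list) e}"
proof -
  have "{e. orbit_eq bs e} \<subseteq> {e. set e \<subseteq> UNIV \<and> length e = length bs}"
    unfolding orbit_eq_def by auto
  then show ?thesis using finite_subset finite_lists_length_eq[OF finite_UNIV] by blast
qed

lemma prod_if_01: fixes n :: nat shows "(\<Prod>k<n. if P k then 1 else (0::'r::comm_semiring_1)) = (if \<forall>k<n. P k then 1 else 0)"
  by (induction n) (auto simp: less_Suc_eq)

lemma tensor_basis: "tensor (map basis_vec e') e = (if e = e' then 1 else (0::'r::comm_ring_1))"
proof (cases "length e = length e'")
  case True
  have "tensor (map basis_vec e') e = (\<Prod>k<length e'. if e ! k = e' ! k then 1 else (0::'r))"
    using True unfolding tensor_def basis_vec_def by simp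
  also have "\<dots> = (if e = e' then 1 else 0)"
    by (simp add: prod_if_01 True list_eq_iff_nth_eq)
  finally show ?thesis .
next
  case False then show ?thesis unfolding tensor_def by auto
qed

lemma x_gen_basis: "x_gen basis_vec K lt bs e =
   (if orbit_eq bs e then (-1) ^ (odd_inv K lt bs + odd_inv K lt e) else (0::'r::comm_ring_1))"
  unfolding x_gen_def tensor_basis using finite_orbit[of bs]
  by (simp add: if_distrib cong: if_cong)



lemma lists_Suc_image: "{f. length f = Suc n} = (\<lambda>(y, f). y # f) ` (UNIV \<times> {f. length f = n})"
  by (auto simp: length_Suc_conv image_iff)

lemma sum_lists_prod:
  fixes h :: "nat \<Rightarrow> 'b::finite \<Rightarrow> 'r::comm_semiring_1" and n :: nat
  shows "(\<Sum>f\<in>{f. length f = n}. \<Prod>k<n. h k (f ! k)) = (\<Prod>k<n. \<Sum>y\<in>UNIV. h k y)"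
proof (induction n arbitrary: h)
  case 0
  then show ?case by simp
next
  case (Suc n)
  have inj: "inj_on (\<lambda>(y, f). y # f) (UNIV \<times> {f::'b list. length f = n})"
    by (auto simp: inj_on_def)
  have "(\<Sum>f\<in>{f. length f = Suc n}. \<Prod>k<Suc n. h k (f ! k))
      = (\<Sum>(y,f)\<in>UNIV \<times> {f. length f = n}. \<Prod>k<Suc n. h k ((y#f) ! k))"
    unfolding lists_Suc_image by (subst sum.reindex[OF inj]) (simp add: case_prod_beta)
  also have "\<dots> = (\<Sum>(y,f)\<in>UNIV \<times> {f. length f = n}. h 0 y * (\<Prod>k<n. h (Suc k) (f ! k)))"
    by (simp add: prod.lessThan_Suc_shift del: prod.lessThan_Suc)
  also have "\<dots> = (\<Sum>y\<in>UNIV. h 0 y) * (\<Sum>f\<in>{f. length f = n}. \<Prod>k<n. h (Suc k) (f ! k))"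
    by (simp add: sum_product sum.cartesian_product)
  also have "\<dots> = (\<Sum>y\<in>UNIV. h 0 y) * (\<Prod>k<n. \<Sum>y\<in>UNIV. h (Suc k) y)"
    using Suc.IH[of "\<lambda>k. h (Suc k)"] by simp
  also have "\<dots> = (\<Prod>k<Suc n. \<Sum>y\<in>UNIV. h k y)"
    by (simp only: prod.lessThan_Suc_shift)
  finally show ?case .
qed

lemma bil_basis: "bil G (basis_vec b') v = (\<Sum>y\<in>UNIV. v y * G b' y)"
proof -
  have "(\<Sum>y\<in>UNIV. basis_vec b' x * v y * G x y) = (if x = b' then (\<Sum>y\<in>UNIV. v y * G b' y) else 0)" for x
    by (auto simp: basis_vec_def)
  then show ?thesis by (simp add: bil_def)
qed

lemma homog:
  fixes G :: "'b::finite \<Rightarrow> 'b \<Rightarrow> 'r::idom" and dual :: "'b \<Rightarrow> 'b \<Rightarrow> 'r"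
  assumes even: "\<And>x y. G x y \<noteq> 0 \<Longrightarrow> (kind x = KO \<longleftrightarrow> kind y = KO)"
    and supsym: "\<And>x y. G x y = \<epsilon> * (-1) ^ (if kind x = KO \<and> kind y = KO then 1 else 0) * G y x"
    and nondeg: "\<And>v. (\<forall>w. bil G v w = 0) \<Longrightarrow> v = (\<lambda>_. 0)"
    and dual: "\<And>b b'. bil G (basis_vec b') (dual b) = (if b = b' then 1 else 0)"
    and nz: "dual b y \<noteq> 0"
  shows "kind y = KO \<longleftrightarrow> kind b = KO"
proof (rule ccontr)
  assume np: "\<not> (kind y = KO \<longleftrightarrow> kind b = KO)"
  define v where "v = (\<lambda>y. if (kind y = KO) \<noteq> (kind b = KO) then dual b y else 0)"
  have c1: "(\<Sum>y\<in>UNIV. v y * G b' y) = 0" for b'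
  proof (cases "(kind b' = KO) = (kind b = KO)")
    case True
    have z: "v y * G b' y = 0" for y
      using even[of b' y] True unfolding v_def by auto
    show ?thesis by (rule sum.neutral) (simp add: z)
  next
    case False
    then have "b \<noteq> b'" by auto
    have z: "v y * G b' y = dual b y * G b' y" for y
      using even[of b' y] False unfolding v_def by auto
    have "(\<Sum>y\<in>UNIV. v y * G b' y) = bil G (basis_vec b') (dual b)"
      unfolding bil_basis by (rule sum.cong) (simp_all only: z)
    then show ?thesis using dual \<open>b \<noteq> b'\<close> by simp
  qed
  have c2: "(\<Sum>x\<in>UNIV. v x * G x b') = 0" for b'
  proof -
    let ?c = "\<epsilon> * (-1) ^ (if kind b' = KO then 1 else 0)"
    have z: "v x * G x b' = ?c * (v x * G b' x)" for x
    proof (cases "G b' x = 0")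
      case True
      then show ?thesis using supsym[of x b'] by simp
    next
      case False
      then have "kind b' = KO \<longleftrightarrow> kind x = KO" using even by blast
      then show ?thesis using supsym[of x b'] by (simp add: algebra_simps)
    qed
    have "(\<Sum>x\<in>UNIV. v x * G x b') = ?c * (\<Sum>x\<in>UNIV. v x * G b' x)"
      unfolding sum_distrib_left by (rule sum.cong) (simp_all only: z)
    then show ?thesis using c1 by simp
  qed
  have "bil G v w = 0" for w
  proof -
    have "bil G v w = (\<Sum>y\<in>UNIV. w y * (\<Sum>x\<in>UNIV. v x * G x y))"
      unfolding bil_def by (subst sum.swap) (simp add: sum_distrib_left algebra_simps)
    then show ?thesis using c2 by simp
  qed
  then have "v = (\<lambda>_. 0)" using nondeg by blast
  then have "v y = 0" by simp
  then show False using np nz unfolding v_def by auto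
qed

lemma keyL:
  fixes G :: "'b::finite \<Rightarrow> 'b \<Rightarrow> 'r::idom" and dual :: "'b \<Rightarrow> 'b \<Rightarrow> 'r"
  assumes hom: "\<And>b y. dual b y \<noteq> 0 \<Longrightarrow> (K y = KO \<longleftrightarrow> K b = KO)"
    and dual: "\<And>b b'. bil G (basis_vec b') (dual b) = (if b = b' then 1 else 0)"
    and le: "length e = d" "length g = d"
  shows "(\<Sum>f\<in>{f. length f = d}. tensor (map dual g) f * (-1) ^ pair_sgn K e f * (\<Prod>k<d. G (e ! k) (f ! k)))
       = (-1) ^ pair_sgn K e g * (if e = g then 1 else 0)"
proof -
  have tm: "tensor (map dual g) f * (-1) ^ pair_sgn K e f * (\<Prod>k<d. G (e ! k) (f ! k))
      = (-1) ^ pair_sgn K e g * (\<Prod>k<d. dual (g ! k) (f ! k) * G (e ! k) (f ! k))"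
    if lf: "f \<in> {f. length f = d}" for f
  proof -
    have t: "tensor (map dual g) f = (\<Prod>k<d. dual (g ! k) (f ! k))"
      using lf le unfolding tensor_def by simp
    show ?thesis
    proof (cases "(\<Prod>k<d. dual (g ! k) (f ! k)) = 0")
      case True
      then show ?thesis unfolding t prod.distrib by simp
    next
      case False
      then have "\<forall>k<d. dual (g ! k) (f ! k) \<noteq> 0" by (simp add: prod_zero_iff)
      then have "\<forall>k<d. K (f ! k) = KO \<longleftrightarrow> K (g ! k) = KO" using hom by blast
      then have "pair_sgn K e f = pair_sgn K e g"
        unfolding pair_sgn_def using le by (intro arg_cong[where f=card]) auto
      then show ?thesis unfolding t prod.distrib by (simp add: algebra_simps)
    qed
  qed
  have "(\<Sum>f\<in>{f. length f = d}. tensor (map dual g) f * (-1) ^ pair_sgn K e f * (\<Prod>k<d. G (e ! k) (f ! k)))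
      = (-1) ^ pair_sgn K e g * (\<Sum>f\<in>{f. length f = d}. \<Prod>k<d. dual (g ! k) (f ! k) * G (e ! k) (f ! k))"
    unfolding sum_distrib_left by (rule sum.cong) (simp_all only: tm)
  also have "\<dots> = (-1) ^ pair_sgn K e g * (\<Prod>k<d. \<Sum>y\<in>UNIV. dual (g ! k) y * G (e ! k) y)"
    by (simp only: sum_lists_prod[of "\<lambda>k y. dual (g ! k) y * G (e ! k) y"])
  also have "\<dots> = (-1) ^ pair_sgn K e g * (\<Prod>k<d. if g ! k = e ! k then 1 else 0)"
    by (simp only: dual flip: bil_basis)
  also have "\<dots> = (-1) ^ pair_sgn K e g * (if e = g then 1 else 0)"
    by (simp add: prod_if_01 list_eq_iff_nth_eq le) 
  finally show ?thesis .
qed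




lemma pairs_card:
  assumes dist: "\<forall>i<length xs. \<forall>j<length xs. i \<noteq> j \<longrightarrow> xs ! i = xs ! j \<longrightarrow> \<not> Q (xs ! i)"
    and sym: "\<And>x y. P x y \<Longrightarrow> P y x"
  shows "card {(k, l). k < l \<and> l < length xs \<and> Q (xs ! k) \<and> Q (xs ! l) \<and> P (xs ! k) (xs ! l)}
       = card {{x, y} | x y. x \<in> set xs \<and> y \<in> set xs \<and> x \<noteq> y \<and> Q x \<and> Q y \<and> P x y}"
proof (rule bij_betw_same_card[of "\<lambda>(k, l). {xs ! k, xs ! l}"], rule bij_betwI')
  fix a b
  assume a: "a \<in> {(k, l). k < l \<and> l < length xs \<and> Q (xs ! k) \<and> Q (xs ! l) \<and> P (xs ! k) (xs ! l)}"
    and b: "b \<in> {(k, l). k < l \<and> l < length xs \<and> Q (xs ! k) \<and> Q (xs ! l) \<and> P (xs ! k) (xs ! l)}"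
  obtain k l where kl: "a = (k, l)" by (cases a)
  obtain k' l' where kl': "b = (k', l')" by (cases b)
  show "((case a of (k, l) \<Rightarrow> {xs ! k, xs ! l}) = (case b of (k, l) \<Rightarrow> {xs ! k, xs ! l})) = (a = b)"
  proof
    assume eq: "(case a of (k, l) \<Rightarrow> {xs ! k, xs ! l}) = (case b of (k, l) \<Rightarrow> {xs ! k, xs ! l})"
    then have "{xs ! k, xs ! l} = {xs ! k', xs ! l'}" using kl kl' by simp
    then have "(xs ! k = xs ! k' \<and> xs ! l = xs ! l') \<or> (xs ! k = xs ! l' \<and> xs ! l = xs ! k')"
      by (auto simp: doubleton_eq_iff)
    have ak: "k < l" "l < length xs" "Q (xs ! k)" "Q (xs ! l)" using a kl by auto
    have bk: "k' < l'" "l' < length xs" "Q (xs ! k')" "Q (xs ! l')" using b kl' by auto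
    have inj: "\<And>i j. i < length xs \<Longrightarrow> j < length xs \<Longrightarrow> Q (xs ! i) \<Longrightarrow> xs ! i = xs ! j \<Longrightarrow> i = j"
      using dist by blast
    show "a = b"
    proof (cases "xs ! k = xs ! k' \<and> xs ! l = xs ! l'")
      case True
      then have "k = k'" "l = l'" using inj ak bk by (meson less_trans)+
      then show ?thesis using kl kl' by simp
    next
      case False
      then have "xs ! k = xs ! l' \<and> xs ! l = xs ! k'" using \<open>(xs ! k = xs ! k' \<and> xs ! l = xs ! l') \<or> _\<close> by blast
      then have "k = l'" "l = k'" using inj ak bk by (meson less_trans)+
      then show ?thesis using ak bk by simp
    qed
  qed simp
next
  fix a
  assume a: "a \<in> {(k, l). k < l \<and> l < length xs \<and> Q (xs ! k) \<and> Q (xs ! l) \<and> P (xs ! k) (xs ! l)}"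
  obtain k l where kl: "a = (k, l)" by (cases a)
  have "k < l" "l < length xs" "Q (xs ! k)" using a kl by auto
  then have "xs ! k \<noteq> xs ! l" using dist by (metis less_trans nat_neq_iff)
  then show "(case a of (k, l) \<Rightarrow> {xs ! k, xs ! l})
      \<in> {{x, y} | x y. x \<in> set xs \<and> y \<in> set xs \<and> x \<noteq> y \<and> Q x \<and> Q y \<and> P x y}"
  proof -
    have "xs ! k \<in> set xs" "xs ! l \<in> set xs" using \<open>k < l\<close> \<open>l < length xs\<close> by simp_all
    moreover have "Q (xs ! l)" "P (xs ! k) (xs ! l)" using a kl by auto
    ultimately show ?thesis using \<open>xs ! k \<noteq> xs ! l\<close> \<open>Q (xs ! k)\<close> kl by blast
  qed
next
  fix s
  assume "s \<in> {{x, y} | x y. x \<in> set xs \<and> y \<in> set xs \<and> x \<noteq> y \<and> Q x \<and> Q y \<and> P x y}"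
  then obtain x y where s: "s = {x, y}" "x \<in> set xs" "y \<in> set xs" "x \<noteq> y" "Q x" "Q y" "P x y" by blast
  obtain i where i: "i < length xs" "xs ! i = x" using s(2) by (auto simp: in_set_conv_nth)
  obtain j where j: "j < length xs" "xs ! j = y" using s(3) by (auto simp: in_set_conv_nth)
  have "i \<noteq> j" using i j s(4) by auto
  show "\<exists>a\<in>{(k, l). k < l \<and> l < length xs \<and> Q (xs ! k) \<and> Q (xs ! l) \<and> P (xs ! k) (xs ! l)}.
          s = (case a of (k, l) \<Rightarrow> {xs ! k, xs ! l})"
  proof (cases "i < j")
    case True
    then show ?thesis using i j s by (intro bexI[of _ "(i, j)"]) auto
  next
    case False
    then have "j < i" using \<open>i \<noteq> j\<close> by simp
    then show ?thesis using i j s sym[OF s(7)] by (intro bexI[of _ "(j, i)"]) auto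
  qed
qed



lemma odd_inv_parity:
  fixes ltB ltS :: "'b \<Rightarrow> 'b \<Rightarrow> bool"
  assumes dist: "\<forall>i<length xs. \<forall>j<length xs. i \<noteq> j \<longrightarrow> xs ! i = xs ! j \<longrightarrow> K (xs ! i) \<noteq> KO"
    and linB: "\<And>x y. x \<noteq> y \<Longrightarrow> ltB y x \<longleftrightarrow> \<not> ltB x y"
    and linS: "\<And>x y. x \<noteq> y \<Longrightarrow> ltS y x \<longleftrightarrow> \<not> ltS x y"
  shows "((-1::'r::comm_ring_1) ^ (odd_inv K ltB xs + odd_inv K ltS xs))
     = (-1) ^ card {{x, y} | x y. x \<in> set xs \<and> y \<in> set xs \<and> x \<noteq> y \<and> K x = KO \<and> K y = KO
                     \<and> (x \<noteq> y \<and> (ltB y x \<noteq> ltS y x))}"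
proof -
  let ?n = "length xs"
  define A where "A = {(k, l). k < l \<and> l < ?n \<and> K (xs ! k) = KO \<and> K (xs ! l) = KO \<and> ltB (xs ! l) (xs ! k)}"
  define B where "B = {(k, l). k < l \<and> l < ?n \<and> K (xs ! k) = KO \<and> K (xs ! l) = KO \<and> ltS (xs ! l) (xs ! k)}"
  define D where "D = {(k, l). k < l \<and> l < ?n \<and> K (xs ! k) = KO \<and> K (xs ! l) = KO
                      \<and> (xs ! k \<noteq> xs ! l \<and> (ltB (xs ! l) (xs ! k) \<noteq> ltS (xs ! l) (xs ! k)))}"
  have fin: "finite A" "finite B" "finite D"
    unfolding A_def B_def D_def by (auto intro: finite_subset[of _ "{..<?n} \<times> {..<?n}"])
  have neq: "xs ! k \<noteq> xs ! l" if "k < l" "l < ?n" "K (xs ! k) = KO" for k l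
    using dist that by (metis less_trans nat_neq_iff)
  have U: "A \<union> B = D \<union> (A \<inter> B)"
    unfolding A_def B_def D_def using neq by blast
  have Dj: "D \<inter> (A \<inter> B) = {}"
    unfolding A_def B_def D_def by auto
  have "card A + card B = card (A \<union> B) + card (A \<inter> B)"
    using card_Un_Int[OF fin(1,2)] .
  also have "card (A \<union> B) = card D + card (A \<inter> B)"
    unfolding U using fin Dj by (simp add: card_Un_disjoint)
  finally have c: "card A + card B = card D + 2 * card (A \<inter> B)" by simp
  have sym: "(x \<noteq> y \<and> (ltB y x \<noteq> ltS y x)) \<Longrightarrow> (y \<noteq> x \<and> (ltB x y \<noteq> ltS x y))" for x y
    using linB[of x y] linS[of x y] by auto
  have cD: "card D = card {{x, y} | x y. x \<in> set xs \<and> y \<in> set xs \<and> x \<noteq> y \<and> K x = KO \<and> K y = KO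
                     \<and> (x \<noteq> y \<and> (ltB y x \<noteq> ltS y x))}"
    unfolding D_def
    by (rule pairs_card[where Q="\<lambda>x. K x = KO" and P="\<lambda>x y. x \<noteq> y \<and> (ltB y x \<noteq> ltS y x)"])
       (use dist sym in blast)+
  have "odd_inv K ltB xs + odd_inv K ltS xs = card A + card B"
    unfolding odd_inv_def A_def B_def by simp
  then show ?thesis using c cD by (simp add: power_add power_mult)
qed

lemma pair_sgn_self:
  assumes dist: "\<forall>i<length xs. \<forall>j<length xs. i \<noteq> j \<longrightarrow> xs ! i = xs ! j \<longrightarrow> K (xs ! i) \<noteq> KO"
  shows "pair_sgn K xs xs = card {{x, y} | x y. x \<in> set xs \<and> y \<in> set xs \<and> x \<noteq> y \<and> K x = KO \<and> K y = KO \<and> x \<noteq> y}"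
proof -
  let ?n = "length xs"
  have neq: "xs ! k \<noteq> xs ! l" if "k < l" "l < ?n" "K (xs ! k) = KO" for k l
    using dist that by (metis less_trans nat_neq_iff)
  have "{(k, l). l < k \<and> k < ?n \<and> K (xs ! k) = KO \<and> K (xs ! l) = KO}
     = (\<lambda>(k, l). (l, k)) ` {(k, l). k < l \<and> l < ?n \<and> K (xs ! k) = KO \<and> K (xs ! l) = KO \<and> xs ! k \<noteq> xs ! l}"
  proof (intro subset_antisym subsetI)
    fix p assume "p \<in> {(k, l). l < k \<and> k < ?n \<and> K (xs ! k) = KO \<and> K (xs ! l) = KO}"
    then obtain k l where p: "p = (k, l)" "l < k" "k < ?n" "K (xs ! k) = KO" "K (xs ! l) = KO" by auto
    then have "xs ! l \<noteq> xs ! k" using neq by blast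
    then show "p \<in> (\<lambda>(k, l). (l, k)) ` {(k, l). k < l \<and> l < ?n \<and> K (xs ! k) = KO \<and> K (xs ! l) = KO \<and> xs ! k \<noteq> xs ! l}"
      using p by (intro image_eqI[of _ _ "(l, k)"]) auto
  next
    fix p assume "p \<in> (\<lambda>(k, l). (l, k)) ` {(k, l). k < l \<and> l < ?n \<and> K (xs ! k) = KO \<and> K (xs ! l) = KO \<and> xs ! k \<noteq> xs ! l}"
    then show "p \<in> {(k, l). l < k \<and> k < ?n \<and> K (xs ! k) = KO \<and> K (xs ! l) = KO}" by auto
  qed
  moreover have "inj_on (\<lambda>(k, l). (l, k)) X" for X :: "(nat \<times> nat) set"
    by (auto simp: inj_on_def)
  ultimately have "pair_sgn K xs xs = card {(k, l). k < l \<and> l < ?n \<and> K (xs ! k) = KO \<and> K (xs ! l) = KO \<and> xs ! k \<noteq> xs ! l}"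
    unfolding pair_sgn_def by (simp add: card_image)
  also have "\<dots> = card {{x, y} | x y. x \<in> set xs \<and> y \<in> set xs \<and> x \<noteq> y \<and> K x = KO \<and> K y = KO \<and> x \<noteq> y}"
    by (rule pairs_card[where Q="\<lambda>x. K x = KO" and P="\<lambda>x y. x \<noteq> y"]) (use dist in blast)+
  finally show ?thesis .
qed



definition distO :: "('b \<Rightarrow> kind) \<Rightarrow> 'b list \<Rightarrow> bool" where
  "distO K xs \<longleftrightarrow> (\<forall>i<length xs. \<forall>j<length xs. i \<noteq> j \<longrightarrow> xs ! i = xs ! j \<longrightarrow> K (xs ! i) \<noteq> KO)"

lemma distO_orbit:
  assumes "distO K bs" "orbit_eq bs e"
  shows "distO K e"
proof -
  obtain \<sigma> where s: "\<sigma> permutes {..<length bs}" "e = map (\<lambda>i. bs ! \<sigma> i) [0..<length bs]"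
    using assms(2) unfolding orbit_eq_def by auto
  have le: "length e = length bs" using s by simp
  have nth: "i < length bs \<Longrightarrow> e ! i = bs ! \<sigma> i" for i using s by simp
  have lt: "i < length bs \<Longrightarrow> \<sigma> i < length bs" for i using permutes_in_image[OF s(1)] by simp
  have inj: "\<sigma> i = \<sigma> j \<Longrightarrow> i = j" for i j using permutes_inj[OF s(1)] by (simp add: inj_eq)
  show ?thesis unfolding distO_def le
  proof (intro allI impI)
    fix i j assume "i < length bs" "j < length bs" "i \<noteq> j" "e ! i = e ! j"
    then show "K (e ! i) \<noteq> KO" using assms(1) nth lt inj unfolding distO_def by metis
  qed
qed

lemma swapk_KO: "swapk k = KO \<longleftrightarrow> k = KO"
  by (cases k) auto

lemma odd_inv_swapk: "odd_inv (swapk \<circ> K) lt xs = odd_inv K lt xs"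
  unfolding odd_inv_def by (simp add: swapk_KO)

lemma sign_inv:
  fixes ltB ltS :: "'b \<Rightarrow> 'b \<Rightarrow> bool"
  assumes "distO K xs" "distO K ys" "set xs = set ys"
    and linB: "\<And>x y. x \<noteq> y \<Longrightarrow> ltB y x \<longleftrightarrow> \<not> ltB x y"
    and linS: "\<And>x y. x \<noteq> y \<Longrightarrow> ltS y x \<longleftrightarrow> \<not> ltS x y"
  shows "((-1::'r::comm_ring_1) ^ (odd_inv K ltB xs + odd_inv K ltS xs + pair_sgn K xs xs))
       = (-1) ^ (odd_inv K ltB ys + odd_inv K ltS ys + pair_sgn K ys ys)"
proof -
  have "((-1::'r) ^ (odd_inv K ltB xs + odd_inv K ltS xs + pair_sgn K xs xs))
      = (-1) ^ (odd_inv K ltB xs + odd_inv K ltS xs) * (-1) ^ pair_sgn K xs xs"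
    by (simp add: power_add)
  also have "\<dots> = (-1) ^ (odd_inv K ltB ys + odd_inv K ltS ys) * (-1) ^ pair_sgn K ys ys"
  proof -
    have dx: "\<forall>i<length xs. \<forall>j<length xs. i \<noteq> j \<longrightarrow> xs ! i = xs ! j \<longrightarrow> K (xs ! i) \<noteq> KO"
      using assms(1) unfolding distO_def by blast
    have dy: "\<forall>i<length ys. \<forall>j<length ys. i \<noteq> j \<longrightarrow> ys ! i = ys ! j \<longrightarrow> K (ys ! i) \<noteq> KO"
      using assms(2) unfolding distO_def by blast
    note p1 = odd_inv_parity[OF dx linB linS, where 'r='r]
    note p2 = odd_inv_parity[OF dy linB linS, where 'r='r]
    show ?thesis
      apply (subst p1, blast)
      apply (subst p2, blast)
      unfolding pair_sgn_self[OF dx] pair_sgn_self[OF dy] assms(3) ..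
  qed
  also have "\<dots> = (-1) ^ (odd_inv K ltB ys + odd_inv K ltS ys + pair_sgn K ys ys)"
    by (simp add: power_add)
  finally show ?thesis .
qed

lemma count_odd_one:
  assumes "distO K bs" "x \<in> set bs" "K x = KO"
  shows "count_list bs x = 1"
proof -
  have "count_list bs x = card {i. i < length bs \<and> x = bs ! i}"
    by (simp add: count_list_eq_length_filter length_filter_conv_card)
  moreover have "card {i. i < length bs \<and> x = bs ! i} \<le> Suc 0"
  proof (subst card_le_Suc0_iff_eq)
    show "finite {i. i < length bs \<and> x = bs ! i}" by simp
    show "\<forall>a\<in>{i. i < length bs \<and> x = bs ! i}. \<forall>b\<in>{i. i < length bs \<and> x = bs ! i}. a = b"
    proof (intro ballI)
      fix a b assume a: "a \<in> {i. i < length bs \<and> x = bs ! i}" and b: "b \<in> {i. i < length bs \<and> x = bs ! i}"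
      show "a = b"
      proof (rule ccontr)
        assume "a \<noteq> b"
        moreover have "a < length bs" "b < length bs" "bs ! a = bs ! b" "bs ! a = x" using a b by auto
        ultimately have "K x \<noteq> KO" using assms(1) unfolding distO_def by metis
        then show False using assms(3) by simp
      qed
    qed
  qed
  moreover have "count_list bs x > 0" using assms(2) by (metis count_mset count_mset_gt_0)
  ultimately show ?thesis by simp
qed

lemma cfact_count:
  fixes kind :: "'b \<Rightarrow> kind"
  assumes "distO kind bs" "mset bs' = mset bs"
  shows "cfact kind bs' * cfact (swapk \<circ> kind) bs * card {e. orbit_eq bs e} = fact (length bs)"
proof -
  have se: "set bs' = set bs" by (metis assms(2) set_mset_mset)
  have ce: "count_list bs' x = count_list bs x" for x by (metis assms(2) count_mset)
  let ?f = "\<lambda>x. fact (count_list bs x) :: nat"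
  have c1: "cfact kind bs' = (\<Prod>x\<in>set bs. if kind x = KC then ?f x else 1)"
    unfolding cfact_def se ce by (simp add: prod.inter_filter)
  have c2: "cfact (swapk \<circ> kind) bs = (\<Prod>x\<in>set bs. if kind x = KA then ?f x else 1)"
  proof -
    have "{b \<in> set bs. (swapk \<circ> kind) b = KC} = {b \<in> set bs. kind b = KA}"
      by (auto, (case_tac "kind x"; simp)+)
    then show ?thesis unfolding cfact_def by (simp add: prod.inter_filter)
  qed
  have "(\<Prod>x\<in>set bs. ?f x) = (\<Prod>x\<in>set bs. (if kind x = KC then ?f x else 1) * (if kind x = KA then ?f x else 1))"
  proof (rule prod.cong)
    fix x assume x: "x \<in> set bs"
    show "?f x = (if kind x = KC then ?f x else 1) * (if kind x = KA then ?f x else 1)"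
    proof (cases "kind x")
      case KO
      then show ?thesis using count_odd_one[OF assms(1) x] by simp
    qed simp_all
  qed simp
  then have p: "cfact kind bs' * cfact (swapk \<circ> kind) bs = (\<Prod>x\<in>set bs. ?f x)"
    unfolding c1 c2 prod.distrib by simp
  have O: "{e. orbit_eq bs e} = permutations_of_multiset (mset bs)"
    unfolding permutations_of_multiset_def orbit_eq_mset ..
  have "card (permutations_of_multiset (mset bs)) * (\<Prod>x\<in>set_mset (mset bs). fact (count (mset bs) x)) = fact (size (mset bs))"
    by (rule card_permutations_of_multiset_aux)
  then show ?thesis unfolding p O by (simp add: count_mset mult.commute)
qed



lemma neg1_pow: "(-1::'r::comm_ring_1) ^ n = 1 \<or> (-1::'r) ^ n = -1"
  by (cases "even n") auto

theorem lemma3p9: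
  fixes G :: "'b::finite \<Rightarrow> 'b \<Rightarrow> 'r::{idom, ring_char_0}"
    and kind :: "'b \<Rightarrow> kind"
    and ordB ordS :: "'b rel"
    and cp :: "'b \<Rightarrow> 'b"
    and dual :: "'b \<Rightarrow> ('b \<Rightarrow> 'r)"
    and \<epsilon> :: 'r
    and d :: nat
    and bs bs' :: "'b list"
  assumes pid: "pid_type TYPE('r)"
    and ordB: "linear_order ordB" and ordS: "linear_order ordS"
    and even: "\<And>x y. G x y \<noteq> 0 \<Longrightarrow> (kind x = KO \<longleftrightarrow> kind y = KO)"
    and eps: "\<epsilon> = 1 \<or> \<epsilon> = -1"
    and supsym: "\<And>x y. G x y = \<epsilon> * (-1) ^ (if kind x = KO \<and> kind y = KO then 1 else 0) * G y x"
    and nondeg: "\<And>v. (\<forall>w. bil G v w = 0) \<Longrightarrow> v = (\<lambda>_. 0)"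
    and aa: "\<And>x y. kind x = KA \<Longrightarrow> kind y = KA \<Longrightarrow> G x y = 0"
    and cp_bij: "bij_betw cp {b. kind b = KA} {b. kind b = KC}"
    and ac: "\<And>x y. kind x = KA \<Longrightarrow> kind y = KC \<Longrightarrow> G x y = (if y = cp x then 1 else 0)"
    and dual: "\<And>b b'. bil G (basis_vec b') (dual b) = (if b = b' then 1 else 0)"
    and b_seq: "bs \<in> Seq UNIV kind d" and b'_seq: "bs' \<in> Seq UNIV kind d"
  shows "map dual bs \<in> Seq (range dual) (\<lambda>v. swapk (kind (inv dual v))) d
       \<and> (\<exists>s::'r. (s = 1 \<or> s = -1) \<and>
            form_d G kind d
              (y_gen basis_vec kind (\<lambda>x y. (x, y) \<in> ordB \<and> x \<noteq> y) bs')
              (y_gen dual (swapk \<circ> kind) (\<lambda>x y. (x, y) \<in> ordS \<and> x \<noteq> y) bs)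
            = s * of_nat (fact d) * (if orbit_eq bs bs' then 1 else 0))"
proof -
  define ltB where "ltB = (\<lambda>x y. (x, y) \<in> ordB \<and> x \<noteq> y)"
  define ltS where "ltS = (\<lambda>x y. (x, y) \<in> ordS \<and> x \<noteq> y)"
  have len: "length bs = d" "length bs' = d" using b_seq b'_seq unfolding Seq_def by auto
  have dbs: "distO kind bs" using b_seq len unfolding Seq_def distO_def by auto
  have linB: "\<And>x y. x \<noteq> y \<Longrightarrow> ltB y x \<longleftrightarrow> \<not> ltB x y"
    using ordB unfolding ltB_def linear_order_on_def partial_order_on_def total_on_def antisym_def by blast
  have linS: "\<And>x y. x \<noteq> y \<Longrightarrow> ltS y x \<longleftrightarrow> \<not> ltS x y"
    using ordS unfolding ltS_def linear_order_on_def partial_order_on_def total_on_def antisym_def by blast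
  have injd: "inj dual"
  proof (rule injI)
    fix a b assume "dual a = dual b"
    then have "bil G (basis_vec a) (dual b) = 1" using dual[of a a] by simp
    then show "a = b" using dual[of a b] dual[of b a] by (simp split: if_splits)
  qed
  have part1: "map dual bs \<in> Seq (range dual) (\<lambda>v. swapk (kind (inv dual v))) d"
    using dbs len unfolding Seq_def distO_def by (auto simp: inv_f_f[OF injd] swapk_KO inj_eq[OF injd])
  have hom: "\<And>b y. dual b y \<noteq> 0 \<Longrightarrow> (kind y = KO \<longleftrightarrow> kind b = KO)"
    by (rule homog[OF even supsym nondeg dual])
  define Ob where "Ob = {e. orbit_eq bs e}"
  define Ob2 where "Ob2 = {e. orbit_eq bs' e}"
  define L where "L = {e::'b list. length e = d}"
  have finL: "finite L" unfolding L_def using finite_lists_length_eq[of "UNIV::'b set" d] by simp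
  have OL: "Ob \<subseteq> L" "Ob2 \<subseteq> L" unfolding Ob_def Ob2_def L_def orbit_eq_def using len by auto
  define c1 where "c1 = cfact kind bs'"
  define c2 where "c2 = cfact (swapk \<circ> kind) bs"
  define s1 where "s1 = (\<lambda>e. (-1::'r) ^ (odd_inv kind ltB bs' + odd_inv kind ltB e))"
  define s2 where "s2 = (\<lambda>e. (-1::'r) ^ (odd_inv (swapk \<circ> kind) ltS bs + odd_inv (swapk \<circ> kind) ltS e))"
  define X where "X = (y_gen basis_vec kind ltB bs' :: 'b list \<Rightarrow> 'r)"
  define Y where "Y = y_gen dual (swapk \<circ> kind) ltS bs"
  have Xe: "X e = of_nat c1 * (if e \<in> Ob2 then s1 e else 0)" for e
    unfolding X_def y_gen_def x_gen_basis c1_def Ob2_def s1_def by simp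
  have Yf: "Y f = of_nat c2 * (\<Sum>g\<in>Ob. s2 g * tensor (map dual g) f)" for f
    unfolding Y_def y_gen_def x_gen_def c2_def Ob_def s2_def by simp
  have inner: "(\<Sum>f\<in>L. Y f * (-1) ^ pair_sgn kind e f * (\<Prod>k<d. G (e ! k) (f ! k)))
      = of_nat c2 * (if e \<in> Ob then s2 e * (-1) ^ pair_sgn kind e e else 0)" if le: "length e = d" for e
  proof -
    let ?a = "\<lambda>f. (-1::'r) ^ pair_sgn kind e f * (\<Prod>k<d. G (e ! k) (f ! k))"
    have "(\<Sum>f\<in>L. Y f * (-1) ^ pair_sgn kind e f * (\<Prod>k<d. G (e ! k) (f ! k)))
        = (\<Sum>f\<in>L. \<Sum>g\<in>Ob. of_nat c2 * (s2 g * (tensor (map dual g) f * ?a f)))"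
      unfolding Yf by (simp add: sum_distrib_left sum_distrib_right mult.assoc)
    also have "\<dots> = of_nat c2 * (\<Sum>g\<in>Ob. s2 g * (\<Sum>f\<in>L. tensor (map dual g) f * ?a f))"
      by (subst sum.swap) (simp add: sum_distrib_left)
    also have "\<dots> = of_nat c2 * (\<Sum>g\<in>Ob. if g = e then s2 g * (-1) ^ pair_sgn kind e g else 0)"
    proof -
      have "s2 g * (\<Sum>f\<in>L. tensor (map dual g) f * ?a f) = (if g = e then s2 g * (-1) ^ pair_sgn kind e g else 0)"
        if g: "g \<in> Ob" for g
      proof -
        have lg: "length g = d" using g OL unfolding L_def by auto
        have "(\<Sum>f\<in>L. tensor (map dual g) f * ?a f) = (-1) ^ pair_sgn kind e g * (if e = g then 1 else 0)"
          using keyL[OF hom dual le lg] unfolding L_def by (simp add: mult.assoc)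
        then show ?thesis by auto
      qed
      then show ?thesis by (intro arg_cong[where f="\<lambda>x. of_nat c2 * x"] sum.cong) auto
    qed
    also have "\<dots> = of_nat c2 * (if e \<in> Ob then s2 e * (-1) ^ pair_sgn kind e e else 0)"
      using finite_subset[OF OL(1) finL] by (simp add: sum.delta)
    finally show ?thesis .
  qed
  have form: "form_d G kind d X Y = of_nat c1 * of_nat c2 * (\<Sum>e\<in>Ob \<inter> Ob2. s1 e * s2 e * (-1) ^ pair_sgn kind e e)"
  proof -
    have "form_d G kind d X Y = (\<Sum>e\<in>L. X e * (\<Sum>f\<in>L. Y f * (-1) ^ pair_sgn kind e f * (\<Prod>k<d. G (e ! k) (f ! k))))"
      unfolding form_d_def L_def by (simp add: sum_distrib_left mult.assoc)
    also have "\<dots> = (\<Sum>e\<in>L. of_nat c1 * of_nat c2 * (if e \<in> Ob \<inter> Ob2 then s1 e * s2 e * (-1) ^ pair_sgn kind e e else 0))"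
    proof (rule sum.cong[OF refl])
      fix e assume "e \<in> L"
      then have le: "length e = d" by (simp add: L_def)
      show "X e * (\<Sum>f\<in>L. Y f * (-1) ^ pair_sgn kind e f * (\<Prod>k<d. G (e ! k) (f ! k)))
          = of_nat c1 * of_nat c2 * (if e \<in> Ob \<inter> Ob2 then s1 e * s2 e * (-1) ^ pair_sgn kind e e else 0)"
        unfolding Xe inner[OF le] by auto
    qed
    also have "\<dots> = of_nat c1 * of_nat c2 * (\<Sum>e\<in>L. if e \<in> Ob \<inter> Ob2 then s1 e * s2 e * (-1) ^ pair_sgn kind e e else 0)"
      by (simp add: sum_distrib_left)
    also have "(\<Sum>e\<in>L. if e \<in> Ob \<inter> Ob2 then s1 e * s2 e * (-1) ^ pair_sgn kind e e else 0)
        = (\<Sum>e\<in>{e\<in>L. e \<in> Ob \<inter> Ob2}. s1 e * s2 e * (-1) ^ pair_sgn kind e e)"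
      using finL by (simp add: sum.inter_filter)
    also have "{e\<in>L. e \<in> Ob \<inter> Ob2} = Ob \<inter> Ob2" using OL by auto
    finally show ?thesis .
  qed
  have part2: "\<exists>s::'r. (s = 1 \<or> s = -1) \<and> form_d G kind d X Y = s * of_nat (fact d) * (if orbit_eq bs bs' then 1 else 0)"
  proof (cases "orbit_eq bs bs'")
    case False
    have "Ob \<inter> Ob2 = {}"
      using False unfolding Ob_def Ob2_def orbit_eq_mset by auto
    then show ?thesis using form False by (intro exI[of _ 1]) simp
  next
    case True
    then have ms: "mset bs' = mset bs" by (simp add: orbit_eq_mset)
    then have OO: "Ob2 = Ob" unfolding Ob_def Ob2_def orbit_eq_mset by simp
    define s0 where "s0 = (-1::'r) ^ (odd_inv kind ltB bs' + odd_inv kind ltS bs)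
        * (-1) ^ (odd_inv kind ltB bs + odd_inv kind ltS bs + pair_sgn kind bs bs)"
    have T: "s1 e * s2 e * (-1) ^ pair_sgn kind e e = s0" if e: "e \<in> Ob" for e
    proof -
      have de: "distO kind e" using distO_orbit[OF dbs] e unfolding Ob_def by simp
      have "mset e = mset bs" using e unfolding Ob_def orbit_eq_mset by simp
      then have se: "set e = set bs" by (metis set_mset_mset)
      have si: "(-1::'r) ^ (odd_inv kind ltB e + odd_inv kind ltS e + pair_sgn kind e e)
          = (-1) ^ (odd_inv kind ltB bs + odd_inv kind ltS bs + pair_sgn kind bs bs)"
        by (rule sign_inv[OF de dbs se]) (use linB linS in blast)+
      have "s1 e * s2 e * (-1) ^ pair_sgn kind e e
          = (-1::'r) ^ (odd_inv kind ltB bs' + odd_inv kind ltS bs)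
            * (-1) ^ (odd_inv kind ltB e + odd_inv kind ltS e + pair_sgn kind e e)"
        unfolding s1_def s2_def odd_inv_swapk by (simp only: power_add mult_ac)
      also have "\<dots> = s0"
        unfolding s0_def by (simp only: si)
      finally show ?thesis .
    qed
    have "form_d G kind d X Y = of_nat c1 * of_nat c2 * (of_nat (card Ob) * s0)"
    proof -
      have "(\<Sum>e\<in>Ob. s1 e * s2 e * (-1) ^ pair_sgn kind e e) = (\<Sum>e\<in>Ob. s0)"
        by (rule sum.cong[OF refl]) (rule T)
      then show ?thesis unfolding form OO by simp
    qed
    also have "\<dots> = s0 * of_nat (c1 * c2 * card Ob)" by (simp only: of_nat_mult mult_ac)
    also have "c1 * c2 * card Ob = fact d"
      unfolding c1_def c2_def Ob_def using cfact_count[OF dbs ms] len by simp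
    finally have "form_d G kind d X Y = s0 * of_nat (fact d)" .
    moreover have "s0 = 1 \<or> s0 = -1"
      unfolding s0_def power_add[symmetric] by (rule neg1_pow)
    ultimately show ?thesis using True by (intro exI[of _ s0]) simp
  qed
  show ?thesis using part1 part2 unfolding X_def Y_def ltB_def ltS_def by simp
qed


end
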